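(* Consider the error system $\dot e(t)=Ae(t)+B\big(u_{\mathrm{adapt}}(t)+W^\top\beta(e(t))+\eta(t)\big)$ with the adaptive control $u_{\mathrm{adapt}}=-\hat W^\top\beta(e)$. Let Assumption 1 hold and let $0<P,Q\in\mathrm S^n$ satisfy $Q=-(A^\top P+PA)$. Let $\Gamma,\Sigma,K\in\mathrm S^{n_\beta}$ with $\Gamma>0$, $\Sigma>0$ and $0\le K<4\Sigma^{-1}$. Let the weights be computed by the PI update law $$\hat W(t)=K\beta(e(t))B^\top Pe(t)+\Gamma\int_0^t\Big(\beta(e(\theta))B^\top Pe(\theta)-\Sigma\hat W(\theta)\Big)\,\mathrm d\theta .$$ If the unstructured uncertainty is bounded, $|\eta(t)|\le\eta^\star<\infty$ for all $t\ge0$, then $e$ and $\hat W$ are uniformly ultimately bounded (UUB).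
   Context: Notation: $\mathrm S^k$ is the set of real symmetric $k\times k$ matrices; inequalities between symmetric matrices are in the Loewner (semidefinite) order; $\|\cdot\|$ is the Euclidean norm. Error system: $e(t)\in\mathbb R^n$, $A\in\mathbb R^{n\times n}$ is known and Hurwitz, $B\in\mathbb R^n$ is known, $\beta:\mathbb R^n\to\mathbb R^{n_\beta}$ is a known function, $W\in\mathbb R^{n_\beta}$ is an unknown constant vector, $\eta(t)\in\mathbb R$ is the unstructured uncertainty. Closed-loop solutions are assumed to exist on $[0,\infty)$. Assumption 1: there exists a non-decreasing function $\alpha_\beta:[0,\infty)\to[0,\infty)$ with $\|\beta(x)\|\le\alpha_\beta(\|x\|)$ for all $x\in\mathbb R^n$. UUB: a solution $x(t)$ (with $x(t_0)=x_0$, $t_0\ge0$) is uniformly ultimately bounded with ultimate bound $b$ if there is $b>0$ independent of $t_0$ such that for every $a>0$ there exists $T=T(a,b)\ge0$, independent of $t_0$, with $\|x(t_0)\|\le a\Rightarrow\|x(t)\|\le b$ for all $t\ge t_0+T$. *)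

theory Defs
  imports "HOL-Analysis.Analysis"
begin

definition sym_mat :: "real^'k^'k \<Rightarrow> bool" where
  "sym_mat M \<longleftrightarrow> transpose M = M"

definition pos_def :: "real^'k^'k \<Rightarrow> bool" where
  "pos_def M \<longleftrightarrow> sym_mat M \<and> (\<forall>x. x \<noteq> 0 \<longrightarrow> x \<bullet> (M *v x) > 0)"

definition pos_semidef :: "real^'k^'k \<Rightarrow> bool" where
  "pos_semidef M \<longleftrightarrow> sym_mat M \<and> (\<forall>x. x \<bullet> (M *v x) \<ge> 0)"

definition hurwitz :: "real^'n^'n \<Rightarrow> bool" where
  "hurwitz A \<longleftrightarrow>
     (\<forall>z::complex. det (mat z - (\<chi> i j. complex_of_real (A $ i $ j))) = 0 \<longrightarrow> Re z < 0)"

definition assumption1 :: "(real^'n \<Rightarrow> real^'m) \<Rightarrow> bool" where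
  "assumption1 \<beta> \<longleftrightarrow> (\<exists>\<alpha>::real \<Rightarrow> real. mono_on {0..} \<alpha> \<and> (\<forall>r\<ge>0. \<alpha> r \<ge> 0) \<and>
      (\<forall>x. norm (\<beta> x) \<le> \<alpha> (norm x)))"

text \<open>Closed-loop solution on [0,\<infinity>): error dynamics with
  u_adapt = - What^T beta(e) and the PI update law for What.
  Here beta(e) B^T P e is written (B \<bullet> (P *v e)) *R beta e.\<close>
definition closed_loop ::
  "real^'n^'n \<Rightarrow> real^'n \<Rightarrow> (real^'n \<Rightarrow> real^'m) \<Rightarrow> real^'m \<Rightarrow> (real \<Rightarrow> real)
   \<Rightarrow> real^'n^'n \<Rightarrow> real^'m^'m \<Rightarrow> real^'m^'m \<Rightarrow> real^'m^'m
   \<Rightarrow> (real \<Rightarrow> real^'n) \<Rightarrow> (real \<Rightarrow> real^'m) \<Rightarrow> bool" where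
  "closed_loop A B \<beta> W \<eta> P \<Gamma> \<Sigma> K e What \<longleftrightarrow>
     (\<forall>t\<ge>0. (e has_vector_derivative
        (A *v e t + ((- (What t \<bullet> \<beta> (e t))) + W \<bullet> \<beta> (e t) + \<eta> t) *\<^sub>R B))
        (at t within {0..})) \<and>
     (\<forall>t\<ge>0. \<exists>I. ((\<lambda>\<theta>. (B \<bullet> (P *v e \<theta>)) *\<^sub>R \<beta> (e \<theta>) - \<Sigma> *v What \<theta>) has_integral I) {0..t} \<and>
        What t = (B \<bullet> (P *v e t)) *\<^sub>R (K *v \<beta> (e t)) + \<Gamma> *v I)"

end

theory Submission
  imports Defs
begin


lemma mv_add: "(M::real^'k^'j) *v (x + y) = M *v x + M *v y" by (simp add: linear_add[OF matrix_vector_mul_linear])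
lemma mv_diff: "(M::real^'k^'j) *v (x - y) = M *v x - M *v y" by (simp add: linear_diff[OF matrix_vector_mul_linear])
lemma mv_scale: "(M::real^'k^'j) *v (c *\<^sub>R x) = c *\<^sub>R (M *v x)" by (rule matrix_vector_mult_scaleR)
lemma mv_neg: "(M::real^'k^'j) *v (- x) = - (M *v x)" by (simp add: linear_neg[OF matrix_vector_mul_linear])
lemma mm_v: "(A ** B) *v (x::real^'k) = A *v (B *v x)" by (simp add: matrix_vector_mul_assoc)
lemma madd_v: "(A + B) *v (x::real^'k) = A *v x + (B *v x)" by (simp add: matrix_vector_mult_add_rdistrib)
lemma mneg_v: "(- A) *v (x::real^'k) = - (A *v x)" by (simp add: matrix_vector_mult_def sum_negf vec_eq_iff)
lemma msc_v: "(c *\<^sub>R A) *v (x::real^'k) = c *\<^sub>R (A *v x)" by (simp add: matrix_vector_mult_def vec_eq_iff sum_distrib_left mult.assoc)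
lemma mat1_v: "mat 1 *v (x::real^'k) = x" by simp

lemma sym_dot: "sym_mat M \<Longrightarrow> x \<bullet> (M *v y) = (M *v x) \<bullet> y"
  by (metis dot_lmul_matrix transpose_matrix_vector sym_mat_def)

lemma quad_scale: "(c *\<^sub>R (x::real^'k)) \<bullet> (M *v (c *\<^sub>R x)) = c^2 * (x \<bullet> (M *v x))"
  by (simp only: mv_scale inner_scaleR_left inner_scaleR_right) (simp add: power2_eq_square)

lemma posdef_lower:
  fixes M :: "real^'k^'k"
  assumes "pos_def M"
  shows "\<exists>c>0. \<forall>x. c * (norm x)^2 \<le> x \<bullet> (M *v x)"
proof -
  have pos: "\<And>x. x \<noteq> 0 \<Longrightarrow> x \<bullet> (M *v x) > 0" using assms unfolding pos_def_def by auto
  have cont: "continuous_on (sphere 0 1) (\<lambda>x::real^'k. x \<bullet> (M *v x))"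
    by (intro continuous_intros linear_continuous_on matrix_vector_mul_bounded_linear)
  have ne: "sphere (0::real^'k) 1 \<noteq> {}"
    using vector_choose_size[of 1, where 'a="real^'k"] by auto
  obtain x0 where x0: "x0 \<in> sphere 0 1" "\<forall>y\<in>sphere 0 1. x0 \<bullet> (M *v x0) \<le> y \<bullet> (M *v y)"
    using continuous_attains_inf[OF compact_sphere ne cont] by blast
  have "x0 \<noteq> 0" using x0(1) by auto
  hence c0: "x0 \<bullet> (M *v x0) > 0" using pos by blast
  show ?thesis
  proof (intro exI conjI allI)
    show "x0 \<bullet> (M *v x0) > 0" by fact
    fix x :: "real^'k"
    show "x0 \<bullet> (M *v x0) * (norm x)^2 \<le> x \<bullet> (M *v x)"
    proof (cases "x = 0")
      case True then show ?thesis by simp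
    next
      case False
      define y where "y = (1 / norm x) *\<^sub>R x"
      have "y \<in> sphere 0 1" using False by (simp add: y_def)
      hence le: "x0 \<bullet> (M *v x0) \<le> y \<bullet> (M *v y)" using x0 by blast
      have xy: "x = norm x *\<^sub>R y" using False by (simp add: y_def)
      have "x \<bullet> (M *v x) = (norm x)^2 * (y \<bullet> (M *v y))"
        by (subst xy, subst xy, rule quad_scale)
      then show ?thesis using mult_right_mono[OF le, of "(norm x)^2"] by (simp add: mult.commute)
    qed
  qed
qed

lemma mat_bound:
  fixes M :: "real^'k^'j"
  shows "\<exists>C>0. \<forall>x. norm (M *v x) \<le> C * norm x"
  using bounded_linear.pos_bounded[OF matrix_vector_mul_bounded_linear[of M]]
  by (auto simp: mult.commute)

lemma quad_upper:
  fixes M :: "real^'k^'k"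
  shows "\<exists>C>0. \<forall>x. x \<bullet> (M *v x) \<le> C * (norm x)^2"
proof -
  obtain C where C: "C > 0" "\<forall>x. norm (M *v x) \<le> C * norm x" using mat_bound by blast
  have "x \<bullet> (M *v x) \<le> C * (norm x)^2" for x
  proof -
    have "x \<bullet> (M *v x) \<le> norm x * norm (M *v x)" by (simp add: norm_cauchy_schwarz)
    also have "\<dots> \<le> norm x * (C * norm x)" using C by (simp add: mult_left_mono)
    finally show ?thesis by (simp add: power2_eq_square mult_ac)
  qed
  thus ?thesis using C by blast
qed

lemma posdef_inv:
  fixes M :: "real^'k^'k"
  assumes "pos_def M"
  shows "M ** matrix_inv M = mat 1" "matrix_inv M ** M = mat 1"
proof -
  have "\<forall>x. M *v x = 0 \<longrightarrow> x = 0"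
    using assms unfolding pos_def_def by (metis inner_zero_right less_irrefl)
  hence "invertible M" by (simp add: invertible_left_inverse matrix_left_invertible_ker)
  hence "\<exists>A'. M ** A' = mat 1 \<and> A' ** M = mat 1" by (simp add: invertible_def)
  from someI_ex[OF this] show "M ** matrix_inv M = mat 1" "matrix_inv M ** M = mat 1"
    by (simp_all add: matrix_inv_def)
qed

lemma psd_cs:
  fixes K :: "real^'k^'k"
  assumes "pos_semidef K"
  shows "(a \<bullet> (K *v b))^2 \<le> (a \<bullet> (K *v a)) * (b \<bullet> (K *v b))"
proof -
  have sym: "sym_mat K" and ps: "\<And>x. x \<bullet> (K *v x) \<ge> 0" using assms unfolding pos_semidef_def by auto
  define A where "A = a \<bullet> (K *v a)"
  define X where "X = a \<bullet> (K *v b)"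
  define Bb where "Bb = b \<bullet> (K *v b)"
  have ba: "b \<bullet> (K *v a) = X" unfolding X_def using sym_dot[OF sym, of b a] by (simp add: inner_commute)
  have q: "0 \<le> A + 2 * t * X + t^2 * Bb" for t
  proof -
    have "0 \<le> (a + t *\<^sub>R b) \<bullet> (K *v (a + t *\<^sub>R b))" by (rule ps)
    also have "\<dots> = A + 2 * t * X + t^2 * Bb"
      unfolding A_def X_def Bb_def using ba
      by (simp add: mv_add mv_scale inner_add_left inner_add_right power2_eq_square algebra_simps X_def)
    finally show ?thesis .
  qed
  have A0: "A \<ge> 0" and B0: "Bb \<ge> 0" unfolding A_def Bb_def by (rule ps)+
  show ?thesis
  proof (cases "Bb = 0")
    case True
    have "X = 0"
    proof (rule ccontr)
      assume "X \<noteq> 0"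
      have "0 \<le> A + 2 * (-(A+1)/(2*X)) * X" using q[of "-(A+1)/(2*X)"] True by simp
      also have "\<dots> = -1" using \<open>X \<noteq> 0\<close> by (simp add: field_simps)
      finally show False by simp
    qed
    then show ?thesis using A0 B0 by (simp add: A_def[symmetric] Bb_def[symmetric] X_def[symmetric])
  next
    case False
    hence Bp: "Bb > 0" using B0 by simp
    have "0 \<le> A + 2 * (-X/Bb) * X + (-X/Bb)^2 * Bb" by (rule q)
    also have "\<dots> = A - X^2 / Bb" using Bp by (simp add: field_simps power2_eq_square)
    finally have "X^2 \<le> A * Bb" using Bp by (simp add: field_simps)
    then show ?thesis by (simp add: A_def X_def Bb_def)
  qed
qed

lemma quad_expand:
  fixes M :: "real^'k^'k"
  assumes "sym_mat M"
  shows "(a + b) \<bullet> (M *v (a + b)) = a \<bullet> (M *v a) + 2 * (a \<bullet> (M *v b)) + b \<bullet> (M *v b)"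
  using sym_dot[OF assms, of b a]
  by (simp add: mv_add inner_add_left inner_add_right inner_commute)



lemma key_quad:
  fixes \<Sigma> K :: "real^'m^'m"
  assumes S: "pos_def \<Sigma>" and K: "pos_semidef K" and SK: "pos_def (4 *\<^sub>R matrix_inv \<Sigma> - K)"
  shows "\<exists>\<delta>>0. \<forall>u \<phi>. \<delta> * (u \<bullet> (\<Sigma> *v u)) \<le> u \<bullet> (\<Sigma> *v u) + u \<bullet> (\<Sigma> *v (K *v \<phi>)) + \<phi> \<bullet> (K *v \<phi>)"
proof -
  define Si where "Si = matrix_inv \<Sigma>"
  have inv1: "\<Sigma> ** Si = mat 1" and inv2: "Si ** \<Sigma> = mat 1" using posdef_inv[OF S] by (simp_all add: Si_def)
  have symS: "sym_mat \<Sigma>" using S by (simp add: pos_def_def)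
  have symK: "sym_mat K" using K by (simp add: pos_semidef_def)
  have Sp: "\<And>x. x \<bullet> (\<Sigma> *v x) \<ge> 0" using S unfolding pos_def_def by (metis inner_zero_left order_refl less_imp_le)
  have Kp: "\<And>x. x \<bullet> (K *v x) \<ge> 0" using K unfolding pos_semidef_def by auto
  have SiS: "\<And>x. Si *v (\<Sigma> *v x) = x" using inv2 by (metis mm_v mat1_v)
  have SSi: "\<And>x. \<Sigma> *v (Si *v x) = x" using inv1 by (metis mm_v mat1_v)
  have Sip: "a \<bullet> (Si *v a) \<ge> 0" for a
  proof -
    have "a \<bullet> (Si *v a) = (\<Sigma> *v (Si *v a)) \<bullet> (Si *v a)" by (simp add: SSi)
    also have "\<dots> = (Si *v a) \<bullet> (\<Sigma> *v (Si *v a))" by (simp add: inner_commute)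
    finally show ?thesis using Sp by simp
  qed
  obtain \<epsilon> where ep: "\<epsilon> > 0" "\<forall>a. \<epsilon> * (norm a)^2 \<le> a \<bullet> ((4 *\<^sub>R Si - K) *v a)"
    using posdef_lower[OF SK] by (auto simp: Si_def)
  obtain lam where la: "lam > 0" "\<forall>a. a \<bullet> (Si *v a) \<le> lam * (norm a)^2"
    using quad_upper by blast
  define \<epsilon>' where "\<epsilon>' = min (\<epsilon>/lam) 2"
  define c where "c = 4 - \<epsilon>'"
  have ep'pos: "\<epsilon>' > 0" using ep la by (simp add: \<epsilon>'_def)
  have c2: "c \<ge> 2" "c < 4" using ep'pos by (auto simp: c_def \<epsilon>'_def)
  have Kc: "a \<bullet> (K *v a) \<le> c * (a \<bullet> (Si *v a))" for a
  proof -
    have e1: "a \<bullet> ((4 *\<^sub>R Si - K) *v a) = 4 * (a \<bullet> (Si *v a)) - a \<bullet> (K *v a)"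
      by (simp add: matrix_vector_mult_diff_rdistrib msc_v inner_diff_right)
    have "\<epsilon>' * (a \<bullet> (Si *v a)) \<le> (\<epsilon>/lam) * (a \<bullet> (Si *v a))"
      using Sip[of a] by (intro mult_right_mono) (auto simp: \<epsilon>'_def)
    also have "\<dots> \<le> (\<epsilon>/lam) * (lam * (norm a)^2)"
      using la ep by (intro mult_left_mono) auto
    also have "\<dots> = \<epsilon> * (norm a)^2" using la by simp
    also have "\<dots> \<le> 4 * (a \<bullet> (Si *v a)) - a \<bullet> (K *v a)" using ep e1 by metis
    finally show ?thesis by (simp add: c_def algebra_simps)
  qed
  have yS: "(K *v \<phi>) \<bullet> (\<Sigma> *v (K *v \<phi>)) \<le> c * (\<phi> \<bullet> (K *v \<phi>))" for \<phi>
  proof -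
    define y where "y = K *v \<phi>"
    define a where "a = \<Sigma> *v y"
    define Y where "Y = y \<bullet> (\<Sigma> *v y)"
    have Y0: "Y \<ge> 0" unfolding Y_def by (rule Sp)
    have aK: "a \<bullet> (K *v \<phi>) = Y" unfolding Y_def a_def y_def by (simp add: inner_commute)
    have aSi: "a \<bullet> (Si *v a) = Y" unfolding Y_def a_def by (simp add: SiS inner_commute)
    have "Y^2 \<le> (a \<bullet> (K *v a)) * (\<phi> \<bullet> (K *v \<phi>))" using psd_cs[OF K, of a \<phi>] aK by simp
    also have "\<dots> \<le> (c * Y) * (\<phi> \<bullet> (K *v \<phi>))"
      using Kc[of a] aSi Kp[of \<phi>] by (intro mult_right_mono) auto
    finally have "Y * Y \<le> Y * (c * (\<phi> \<bullet> (K *v \<phi>)))" by (simp add: power2_eq_square mult_ac)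
    hence "Y \<le> c * (\<phi> \<bullet> (K *v \<phi>))" using Y0 Kp[of \<phi>] c2
      by (cases "Y = 0") (auto simp: mult_le_cancel_left)
    thus ?thesis by (simp add: Y_def y_def)
  qed
  show ?thesis
  proof (intro exI[of _ "\<epsilon>'/4"] conjI allI)
    show "\<epsilon>'/4 > 0" using ep'pos by simp
    fix u \<phi> :: "real^'m"
    define y where "y = K *v \<phi>"
    define U where "U = u \<bullet> (\<Sigma> *v u)"
    define X where "X = u \<bullet> (\<Sigma> *v y)"
    define Y where "Y = y \<bullet> (\<Sigma> *v y)"
    define F where "F = \<phi> \<bullet> (K *v \<phi>)"
    have YF: "Y \<le> c * F" using yS[of \<phi>] by (simp add: Y_def F_def y_def)
    have yu: "y \<bullet> (\<Sigma> *v u) = u \<bullet> (\<Sigma> *v y)" using sym_dot[OF symS, of y u] by (simp add: inner_commute)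
    have sq: "0 \<le> (c *\<^sub>R u + 2 *\<^sub>R y) \<bullet> (\<Sigma> *v (c *\<^sub>R u + 2 *\<^sub>R y))" by (rule Sp)
    also have "\<dots> = c^2 * U + 4 * c * X + 4 * Y"
      using yu by (simp add: quad_expand[OF symS] quad_scale U_def X_def Y_def mv_scale power2_eq_square algebra_simps)
    finally have sq': "0 \<le> c^2 * U + 4 * c * X + 4 * Y" .
    have "0 \<le> c^2 * U + 4 * c * X + 4 * c * F" using sq' YF c2 by linarith
    hence "0 \<le> c * (c * U + 4 * X + 4 * F)" by (simp add: algebra_simps power2_eq_square)
    hence "0 \<le> c * U + 4 * X + 4 * F" using c2 by (simp add: zero_le_mult_iff)
    thus "\<epsilon>'/4 * U \<le> U + X + F" by (simp add: c_def algebra_simps)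
  qed
qed



lemma deriv_zero_quad:
  fixes E :: "real \<Rightarrow> real"
  assumes "\<And>x y. x \<in> S \<Longrightarrow> y \<in> S \<Longrightarrow> \<bar>E y - E x\<bar> \<le> C * (y - x)^2"
    and "x \<in> S"
  shows "(E has_derivative (\<lambda>h. 0)) (at x within S)"
  unfolding has_derivative_within
proof (intro conjI)
  show "bounded_linear (\<lambda>h::real. 0::real)" by simp
  show "((\<lambda>y. (1 / norm (y - x)) *\<^sub>R (E y - (E x + 0))) \<longlongrightarrow> 0) (at x within S)"
  proof (rule Lim_null_comparison[where g="\<lambda>y. \<bar>C\<bar> * \<bar>y - x\<bar>"])
    show "\<forall>\<^sub>F y in at x within S. norm ((1 / norm (y - x)) *\<^sub>R (E y - (E x + 0))) \<le> \<bar>C\<bar> * \<bar>y - x\<bar>"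
      unfolding eventually_at_filter
    proof (intro always_eventually allI impI)
      fix y assume y: "y \<noteq> x" "y \<in> S"
      have "\<bar>E y - E x\<bar> \<le> \<bar>C\<bar> * (y - x)^2" using assms(1)[OF assms(2) y(2)]
        by (metis abs_ge_self mult_right_mono order_trans zero_le_power2)
      also have "\<dots> = (\<bar>C\<bar> * \<bar>y - x\<bar>) * \<bar>y - x\<bar>" by (simp add: power2_eq_square)
      finally have "\<bar>E y - E x\<bar> / \<bar>y - x\<bar> \<le> \<bar>C\<bar> * \<bar>y - x\<bar>" using y by (simp add: divide_le_eq)
      then show "norm ((1 / norm (y - x)) *\<^sub>R (E y - (E x + 0))) \<le> \<bar>C\<bar> * \<bar>y - x\<bar>" by simp
    qed
    show "((\<lambda>y. \<bar>C\<bar> * \<bar>y - x\<bar>) \<longlongrightarrow> 0) (at x within S)"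
      by (rule tendsto_eq_intros refl)+ simp
  qed
qed

lemma CR:
  fixes J g :: "real \<Rightarrow> real^'m" and G :: "real^'m^'m"
  assumes st: "s \<le> t" and sym: "sym_mat G" and bnd: "\<forall>x\<in>{s..t}. norm (g x) \<le> L"
    and int: "\<forall>x\<in>{s..t}. (g has_integral (J x - J s)) {s..x}"
  shows "((\<lambda>\<theta>. 2 * ((G *v J \<theta>) \<bullet> g \<theta>)) has_integral (J t \<bullet> (G *v J t) - J s \<bullet> (G *v J s))) {s..t}"
proof -
  have L0: "L \<ge> 0" using bnd st by (meson atLeastAtMost_iff norm_ge_zero order.trans order_refl)
  have gint: "g integrable_on {s..t}" using int st by auto
  have Jdiff: "(g has_integral (J b - J a)) {a..b}" if "s \<le> a" "a \<le> b" "b \<le> t" for a b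
  proof -
    have ib: "(g has_integral (J b - J s)) {s..b}" and ia: "(g has_integral (J a - J s)) {s..a}"
      using int that by auto
    have c: "integral {s..a} g + integral {a..b} g = integral {s..b} g"
      using Henstock_Kurzweil_Integration.integral_combine[OF that(1,2)] ib by blast
    have i1: "integral {s..b} g = J b - J s" using ib by (rule integral_unique)
    have i2: "integral {s..a} g = J a - J s" using ia by (rule integral_unique)
    have "integral {a..b} g = J b - J a" using c i1 i2 by (simp add: algebra_simps)
    moreover have "g integrable_on {a..b}" using integrable_subinterval_real[OF gint] that by auto
    ultimately show ?thesis by (metis has_integral_integral)
  qed
  have Jlip: "norm (J b - J a) \<le> L * (b - a)" if "s \<le> a" "a \<le> b" "b \<le> t" for a b
    using has_integral_bound[OF L0, of g "J b - J a" a b] Jdiff[OF that] bnd that by auto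
  have Jlip': "dist (J x) (J y) \<le> L * dist x y" if "x \<in> {s..t}" "y \<in> {s..t}" for x y
  proof (cases "x \<le> y")
    case True then show ?thesis using Jlip[of x y] that by (simp add: dist_norm norm_minus_commute)
  next
    case False then show ?thesis using Jlip[of y x] that by (simp add: dist_norm)
  qed
  have Jcont: "continuous_on {s..t} J"
    by (rule lipschitz_on_continuous_on[of L]) (use L0 Jlip' in \<open>auto simp: lipschitz_on_def\<close>)
  obtain Gn where Gn: "Gn > 0" "\<forall>x. norm (G *v x) \<le> Gn * norm x" using mat_bound by blast
  have hint: "(\<lambda>\<theta>. 2 * ((G *v J \<theta>) \<bullet> g \<theta>)) integrable_on {a..b}" if "s \<le> a" "a \<le> b" "b \<le> t" for a b
  proof -
    have gabs: "g absolutely_integrable_on {a..b}"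
      by (rule absolutely_integrable_integrable_bound[where g="\<lambda>_. L"])
         (use bnd that integrable_subinterval_real[OF gint, of a b] in auto)
    have cJ: "continuous_on {a..b} (\<lambda>\<theta>. G *v J \<theta>)"
      by (intro continuous_on_compose2[OF linear_continuous_on[OF matrix_vector_mul_bounded_linear] 
           continuous_on_subset[OF Jcont]]) (use that in auto)
    have "(\<lambda>\<theta>. (G *v J \<theta>) \<bullet> g \<theta>) absolutely_integrable_on {a..b}"
      apply (rule absolutely_integrable_bounded_measurable_product[where h="(\<bullet>)"])
          apply (simp add: bilinear_conv_bounded_bilinear bounded_bilinear_inner)
         apply (rule continuous_imp_measurable_on_sets_lebesgue[OF cJ], simp)
        apply simp
       apply (rule compact_imp_bounded, rule compact_continuous_image[OF cJ], simp)
      by (rule gabs)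
    then show ?thesis
      using set_lebesgue_integral_eq_integral(1) integrable_on_cmult_left by blast
  qed
  define h where "h = (\<lambda>\<theta>. 2 * ((G *v J \<theta>) \<bullet> g \<theta>))"
  have hint': "h integrable_on {a..b}" if "s \<le> a" "a \<le> b" "b \<le> t" for a b
    using hint[OF that] unfolding h_def .
  define q where "q = (\<lambda>v. v \<bullet> (G *v v))"
  define E where "E = (\<lambda>x. q (J x) - q (J s) - integral {s..x} h)"
  define C where "C = 3 * Gn * L^2"
  have Estep: "\<bar>E b - E a\<bar> \<le> C * (b - a)^2" if ab: "s \<le> a" "a \<le> b" "b \<le> t" for a b
  proof -
    have comb: "integral {s..a} h + integral {a..b} h = integral {s..b} h"
      using ab by (intro Henstock_Kurzweil_Integration.integral_combine hint') auto
    define D where "D = J b - J a"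
    have qexp: "q (J b) - q (J a) = 2 * ((G *v J a) \<bullet> D) + q D"
    proof -
      have "J b = J a + D" by (simp add: D_def)
      then have "q (J b) = q (J a) + 2 * (J a \<bullet> (G *v D)) + q D"
        unfolding q_def by (simp add: quad_expand[OF sym])
      moreover have "J a \<bullet> (G *v D) = (G *v J a) \<bullet> D" by (rule sym_dot[OF sym])
      ultimately show ?thesis by simp
    qed
    have hab: "(h has_integral integral {a..b} h) {a..b}" using hint'[OF ab] by auto
    have lin: "((\<lambda>\<theta>. 2 * ((G *v J a) \<bullet> g \<theta>)) has_integral 2 * ((G *v J a) \<bullet> D)) {a..b}"
      using has_integral_mult_right[OF has_integral_linear[OF Jdiff[OF ab] bounded_linear_inner_right[of "G *v J a"]]]
      by (simp add: o_def D_def)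
    define r where "r = (\<lambda>\<theta>. h \<theta> - 2 * ((G *v J a) \<bullet> g \<theta>))"
    have rint: "(r has_integral (integral {a..b} h - 2 * ((G *v J a) \<bullet> D))) {a..b}"
      unfolding r_def by (rule has_integral_diff[OF hab lin])
    have rb: "norm (r \<theta>) \<le> 2 * Gn * L^2 * (b - a)" if "\<theta> \<in> {a..b}" for \<theta>
    proof -
      have "r \<theta> = 2 * ((G *v (J \<theta> - J a)) \<bullet> g \<theta>)"
        by (simp add: r_def h_def mv_diff inner_diff_left algebra_simps)
      also have "norm \<dots> \<le> 2 * (norm (G *v (J \<theta> - J a)) * norm (g \<theta>))"
        by (simp only: real_norm_def abs_mult) (simp add: Cauchy_Schwarz_ineq2)
      also have "\<dots> \<le> 2 * ((Gn * (L * (b - a))) * L)"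
      proof -
        have n1: "norm (G *v (J \<theta> - J a)) \<le> Gn * (L * (b - a))"
        proof -
          have "norm (J \<theta> - J a) \<le> L * (\<theta> - a)" using Jlip[of a \<theta>] that ab by auto
          also have "\<dots> \<le> L * (b - a)" using that L0 by (intro mult_left_mono) auto
          finally have d: "norm (J \<theta> - J a) \<le> L * (b - a)" .
          have "norm (G *v (J \<theta> - J a)) \<le> Gn * norm (J \<theta> - J a)" using Gn(2) by blast
          also have "\<dots> \<le> Gn * (L * (b - a))" using d Gn(1) by (intro mult_left_mono) auto
          finally show ?thesis .
        qed
        have n2: "norm (g \<theta>) \<le> L" using bnd that ab by auto
        have "0 \<le> Gn * (L * (b - a))" using Gn(1) L0 ab by simp
        then show ?thesis using n1 n2 by (intro mult_left_mono mult_mono) (auto simp: L0 Gn ab)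
      qed
      finally show ?thesis by (simp add: power2_eq_square mult_ac)
    qed
    have rbound: "norm (integral {a..b} h - 2 * ((G *v J a) \<bullet> D)) \<le> 2 * Gn * L^2 * (b - a) * (b - a)"
      using has_integral_bound[of "2 * Gn * L^2 * (b - a)" r _ a b] rint rb ab Gn L0 by auto
    have qD: "\<bar>q D\<bar> \<le> Gn * L^2 * (b - a)^2"
    proof -
      have "\<bar>q D\<bar> \<le> norm D * norm (G *v D)" unfolding q_def by (rule Cauchy_Schwarz_ineq2)
      also have "\<dots> \<le> norm D * (Gn * norm D)" using Gn by (simp add: mult_left_mono)
      also have "\<dots> \<le> Gn * (L * (b - a))^2"
      proof -
        have d: "norm D \<le> L * (b - a)" using Jlip[OF ab] by (simp add: D_def)
        have "norm D * norm D \<le> (L * (b - a)) * (L * (b - a))"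
          using d L0 ab by (intro mult_mono) auto
        then show ?thesis using Gn(1) by (simp add: power2_eq_square mult_ac)
      qed
      finally show ?thesis by (simp add: power2_eq_square mult_ac)
    qed
    have "E b - E a = q D - (integral {a..b} h - 2 * ((G *v J a) \<bullet> D))"
      unfolding E_def using qexp comb by (simp add: algebra_simps)
    then have "\<bar>E b - E a\<bar> \<le> \<bar>q D\<bar> + norm (integral {a..b} h - 2 * ((G *v J a) \<bullet> D))" by simp
    also have "\<dots> \<le> C * (b - a)^2" using qD rbound by (simp add: C_def power2_eq_square algebra_simps)
    finally show ?thesis .
  qed
  have Esym: "\<bar>E y - E x\<bar> \<le> C * (y - x)^2" if "x \<in> {s..t}" "y \<in> {s..t}" for x y
  proof (cases "x \<le> y")
    case True then show ?thesis using Estep[of x y] that by auto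
  next
    case False then show ?thesis using Estep[of y x] that by (simp add: abs_minus_commute power2_commute)
  qed
  have "\<exists>c. \<forall>x\<in>{s..t}. E x = c"
    by (rule has_derivative_zero_constant[OF convex_real_interval(5)])
       (rule deriv_zero_quad[OF Esym], auto)
  then have "E t = E s" using st by auto
  then have "integral {s..t} h = q (J t) - q (J s)" by (simp add: E_def)
  moreover have "h integrable_on {s..t}" using hint'[of s t] st by auto
  ultimately show ?thesis unfolding h_def q_def by (metis has_integral_integral h_def)
qed



lemma quad_vd:
  fixes e :: "real \<Rightarrow> real^'n" and P :: "real^'n^'n"
  assumes ed: "(e has_vector_derivative d) (at x within S)" and sym: "sym_mat P"
  shows "((\<lambda>\<theta>. e \<theta> \<bullet> (P *v e \<theta>)) has_vector_derivative (2 * ((P *v e x) \<bullet> d))) (at x within S)"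
proof -
  have e1: "(e has_derivative (\<lambda>h. h *\<^sub>R d)) (at x within S)" using ed by (simp add: has_vector_derivative_def)
  have e2: "((\<lambda>\<theta>. P *v e \<theta>) has_derivative (\<lambda>h. P *v (h *\<^sub>R d))) (at x within S)"
    by (rule bounded_linear.has_derivative[OF matrix_vector_mul_bounded_linear e1])
  have e3: "((\<lambda>\<theta>. e \<theta> \<bullet> (P *v e \<theta>)) has_derivative (\<lambda>h. e x \<bullet> (P *v (h *\<^sub>R d)) + (h *\<^sub>R d) \<bullet> (P *v e x))) (at x within S)"
    by (rule has_derivative_inner[OF e1 e2])
  have eq: "(\<lambda>h. e x \<bullet> (P *v (h *\<^sub>R d)) + (h *\<^sub>R d) \<bullet> (P *v e x)) = (\<lambda>h. h *\<^sub>R (2 * ((P *v e x) \<bullet> d)))"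
    using sym_dot[OF sym, of "e x" d] by (auto simp: mv_scale inner_commute algebra_simps)
  show ?thesis using e3 unfolding has_vector_derivative_def eq .
qed

lemma ult:
  fixes V D :: "real \<Rightarrow> real"
  assumes cont: "\<And>t. continuous_on {t0..t} V" and V0: "\<forall>x\<ge>t0. V x \<ge> 0" and M: "M > 0"
    and integ: "\<And>s t. t0 \<le> s \<Longrightarrow> s \<le> t \<Longrightarrow> (D has_integral (V t - V s)) {s..t}"
    and dec: "\<And>x. x \<ge> t0 \<Longrightarrow> V x \<ge> M \<Longrightarrow> D x \<le> -1"
    and t: "t \<ge> t0 + V t0"
  shows "V t \<le> M"
proof (rule ccontr)
  assume "\<not> V t \<le> M"
  hence Vt: "V t > M" by simp
  have tt0: "t0 \<le> t" using t V0 by force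
  define S where "S = {x \<in> {t0..t}. V x \<le> M}"
  show False
  proof (cases "S = {}")
    case True
    have "\<forall>x\<in>{t0..t}. D x \<le> -1" using True dec unfolding S_def by fastforce
    hence "V t \<le> V t0 - (t - t0)"
      using has_integral_le[OF integ[OF order_refl tt0] has_integral_const_real[of "-1" t0 t]] tt0 by simp
    then show False using t Vt M by linarith
  next
    case False
    have cl: "closed S" unfolding S_def
      by (rule continuous_on_closed_Collect_le) (auto intro: cont)
    have bdd: "bdd_above S" unfolding S_def by (rule bdd_aboveI[of _ t]) auto
    define s where "s = Sup S"
    have sS: "s \<in> S" unfolding s_def by (rule closed_contains_Sup[OF False bdd cl])
    hence s1: "t0 \<le> s" "s \<le> t" "V s \<le> M" unfolding S_def by auto
    have st: "s < t" using s1 Vt by (metis order.not_eq_order_implies_strict not_le)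
    have above: "V x > M" if "s < x" "x \<le> t" for x
    proof (rule ccontr)
      assume "\<not> V x > M"
      hence "x \<in> S" using that s1 unfolding S_def by auto
      hence "x \<le> s" unfolding s_def using bdd by (rule cSup_upper)
      thus False using that by simp
    qed
    define D' where "D' = (\<lambda>x. if x = s then -1 else D x)"
    have iD': "(D' has_integral (V t - V s)) {s..t}"
      by (rule has_integral_spike_finite[of "{s}", OF _ _ integ[OF s1(1,2)]]) (auto simp: D'_def)
    have "\<forall>x\<in>{s..t}. D' x \<le> -1"
      using above dec s1 by (auto simp: D'_def less_le)
    hence "V t \<le> V s - (t - s)"
      using has_integral_le[OF iD' has_integral_const_real[of "-1" s t]] st by simp
    then show False using st s1 Vt by linarith
  qed
qed


lemma cont_quad:
  fixes f :: "real \<Rightarrow> real^'k" and M :: "real^'k^'k"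
  assumes "continuous_on S f"
  shows "continuous_on S (\<lambda>x. f x \<bullet> (M *v f x))"
proof -
  have "continuous_on S (\<lambda>x. M *v f x)"
    by (rule continuous_on_compose2[OF linear_continuous_on[OF matrix_vector_mul_bounded_linear] assms]) auto
  then show ?thesis using assms by (intro continuous_on_inner)
qed



theorem theorem1:
  fixes A P Q :: "real^'n^'n" and B :: "real^'n"
    and \<beta> :: "real^'n \<Rightarrow> real^'m" and W :: "real^'m"
    and \<eta> :: "real \<Rightarrow> real" and \<eta>star :: real
    and \<Gamma> \<Sigma> K :: "real^'m^'m"
  assumes "hurwitz A"
    and "assumption1 \<beta>"
    and "pos_def P" and "pos_def Q"
    and "Q = - (transpose A ** P + P ** A)"
    and "sym_mat \<Gamma>" and "sym_mat \<Sigma>" and "sym_mat K"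
    and "pos_def \<Gamma>" and "pos_def \<Sigma>"
    and "pos_semidef K" and "pos_def (4 *\<^sub>R matrix_inv \<Sigma> - K)"
    and "\<forall>t\<ge>0. \<bar>\<eta> t\<bar> \<le> \<eta>star"
  shows "\<exists>b>0. \<forall>a>0. \<exists>T\<ge>0. \<forall>t0\<ge>0. \<forall>e What.
           closed_loop A B \<beta> W \<eta> P \<Gamma> \<Sigma> K e What \<longrightarrow>
           norm (e t0, What t0) \<le> a \<longrightarrow>
           (\<forall>t\<ge>t0 + T. norm (e t, What t) \<le> b)"
proof -
  have symP: "sym_mat P" using assms(3) by (simp add: pos_def_def)
  obtain p1 where p1: "p1 > 0" "\<forall>x. p1 * (norm x)^2 \<le> x \<bullet> (P *v x)" using posdef_lower[OF assms(3)] by blast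
  obtain p2 where p2: "p2 > 0" "\<forall>x. x \<bullet> (P *v x) \<le> p2 * (norm x)^2" using quad_upper by blast
  obtain PN where PN: "PN > 0" "\<forall>x. norm (P *v x) \<le> PN * norm x" using mat_bound by blast
  obtain q1 where q1: "q1 > 0" "\<forall>x. q1 * (norm x)^2 \<le> x \<bullet> (Q *v x)" using posdef_lower[OF assms(4)] by blast
  obtain g1 where g1: "g1 > 0" "\<forall>x. g1 * (norm x)^2 \<le> x \<bullet> (\<Gamma> *v x)" using posdef_lower[OF assms(9)] by blast
  obtain GN where GN: "GN > 0" "\<forall>x. norm (\<Gamma> *v x) \<le> GN * norm x" using mat_bound by blast
  obtain s1 where s1: "s1 > 0" "\<forall>x. s1 * (norm x)^2 \<le> x \<bullet> (\<Sigma> *v x)" using posdef_lower[OF assms(10)] by blast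
  obtain SN where SN: "SN > 0" "\<forall>x. norm (\<Sigma> *v x) \<le> SN * norm x" using mat_bound by blast
  obtain KN where KN: "KN > 0" "\<forall>x. norm (K *v x) \<le> KN * norm x" using mat_bound by blast
  obtain \<delta> where \<delta>: "\<delta> > 0" "\<forall>u \<phi>. \<delta> * (u \<bullet> (\<Sigma> *v u)) \<le> u \<bullet> (\<Sigma> *v u) + u \<bullet> (\<Sigma> *v (K *v \<phi>)) + \<phi> \<bullet> (K *v \<phi>)"
    using key_quad[OF assms(10) assms(11) assms(12)] by blast
  obtain \<alpha> where \<alpha>: "mono_on {0..} \<alpha>" "\<forall>r\<ge>0. \<alpha> r \<ge> 0" "\<forall>x. norm (\<beta> x) \<le> \<alpha> (norm x)"
    using assms(2) unfolding assumption1_def by blast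
  have eta0: "\<eta>star \<ge> 0" using assms(13) by (meson abs_ge_zero order_trans order_refl)
  define Istar where "Istar = matrix_inv \<Gamma> *v W"
  have GI: "\<Gamma> *v Istar = W" using posdef_inv(1)[OF assms(9)] by (simp add: Istar_def mm_v[symmetric])
  have QA: "x \<bullet> (Q *v x) = - 2 * ((P *v x) \<bullet> (A *v x))" for x
  proof -
    have a1: "x \<bullet> (transpose A *v (P *v x)) = (P *v x) \<bullet> (A *v x)"
      by (metis dot_lmul_matrix inner_commute transpose_matrix_vector)
    have a2: "x \<bullet> (P *v (A *v x)) = (P *v x) \<bullet> (A *v x)" by (rule sym_dot[OF symP])
    have "Q *v x = - (transpose A *v (P *v x) + P *v (A *v x))"
      by (simp only: assms(5) mneg_v madd_v mm_v)
    then have "x \<bullet> (Q *v x) = - (x \<bullet> (transpose A *v (P *v x)) + x \<bullet> (P *v (A *v x)))"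
      by (simp only: inner_minus_right inner_add_right)
    then show ?thesis unfolding a1 a2 by simp
  qed
  have Kphi: "\<phi> \<bullet> (K *v \<phi>) \<ge> 0" for \<phi> using assms(11) by (simp add: pos_semidef_def)
  have symK: "sym_mat K" by (rule assms(8))
  have Vup: "ev \<bullet> (P *v ev) + J \<bullet> (\<Gamma> *v J) \<le> p2 * (norm ev)^2 + (norm (\<Gamma> *v J))^2 / g1" for ev J
  proof -
    have j1: "J \<bullet> (\<Gamma> *v J) \<le> norm J * norm (\<Gamma> *v J)" by (simp add: norm_cauchy_schwarz)
    have j2: "g1 * (norm J)^2 \<le> norm J * norm (\<Gamma> *v J)" using g1(2) j1 by (meson order_trans)
    have j3: "g1 * norm J \<le> norm (\<Gamma> *v J)"
    proof (cases "norm J = 0")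
      case True then show ?thesis by simp
    next
      case False
      then have "norm J > 0" by simp
      then show ?thesis using j2 by (simp add: power2_eq_square mult_ac mult_le_cancel_left_pos)
    qed
    have "norm J * norm (\<Gamma> *v J) \<le> (norm (\<Gamma> *v J) / g1) * norm (\<Gamma> *v J)"
      using j3 g1(1) by (intro mult_right_mono) (auto simp: field_simps)
    then have "J \<bullet> (\<Gamma> *v J) \<le> (norm (\<Gamma> *v J))^2 / g1" using j1 by (simp add: power2_eq_square)
    then show ?thesis using p2(2)[rule_format, of ev] by linarith
  qed
  define BN where "BN = norm B"
  define c1 where "c1 = 2 * BN * PN * \<eta>star"
  define c2 where "c2 = 2 * SN * norm W"
  define C0 where "C0 = c1^2 / (2 * q1) + c2^2 / (4 * \<delta> * s1)"
  define cc where "cc = min (q1 / (2 * p2)) (\<delta> * s1 * g1)"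
  define M where "M = (C0 + 1) / cc"
  have cc0: "cc > 0" using q1 p2 \<delta> s1 g1 by (simp add: cc_def)
  have C00: "C0 \<ge> 0" using q1 \<delta> s1 by (simp add: C0_def)
  have M0: "M > 0" using cc0 C00 by (simp add: M_def)
  have sbound: "\<bar>B \<bullet> (P *v ev)\<bar> \<le> BN * PN * norm ev" for ev
  proof -
    have "\<bar>B \<bullet> (P *v ev)\<bar> \<le> norm B * norm (P *v ev)" by (rule Cauchy_Schwarz_ineq2)
    also have "\<dots> \<le> norm B * (PN * norm ev)" using PN(2) by (simp add: mult_left_mono)
    finally show ?thesis by (simp add: BN_def mult_ac)
  qed
  have Dbound: "2 * ((P *v ev) \<bullet> (A *v ev + ((- (Wh \<bullet> bv)) + W \<bullet> bv + \<eta>0) *\<^sub>R B))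
        + 2 * ((\<Gamma> *v (Iv - Istar)) \<bullet> ((B \<bullet> (P *v ev)) *\<^sub>R bv - \<Sigma> *v Wh))
        \<le> - cc * (ev \<bullet> (P *v ev) + (Iv - Istar) \<bullet> (\<Gamma> *v (Iv - Istar))) + C0"
    if Wh: "Wh = (B \<bullet> (P *v ev)) *\<^sub>R (K *v bv) + \<Gamma> *v Iv" and eta: "\<bar>\<eta>0\<bar> \<le> \<eta>star"
    for ev Wh bv \<eta>0 Iv
  proof -
    define s where "s = B \<bullet> (P *v ev)"
    define \<phi> where "\<phi> = s *\<^sub>R bv"
    define u where "u = \<Gamma> *v (Iv - Istar)"
    have Whu: "Wh = K *v \<phi> + u + W"
      using Wh GI by (simp add: \<phi>_def s_def u_def mv_scale mv_diff)
    have Ps: "(P *v ev) \<bullet> B = s" by (simp add: s_def inner_commute)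
    have e1: "2 * ((P *v ev) \<bullet> (A *v ev + ((- (Wh \<bullet> bv)) + W \<bullet> bv + \<eta>0) *\<^sub>R B))
        = - (ev \<bullet> (Q *v ev)) - 2 * (Wh \<bullet> \<phi>) + 2 * (W \<bullet> \<phi>) + 2 * s * \<eta>0"
      by (simp add: QA inner_add_right Ps \<phi>_def algebra_simps)
    have e2: "2 * ((\<Gamma> *v (Iv - Istar)) \<bullet> ((B \<bullet> (P *v ev)) *\<^sub>R bv - \<Sigma> *v Wh))
        = 2 * (u \<bullet> \<phi>) - 2 * (u \<bullet> (\<Sigma> *v Wh))"
      by (simp add: u_def \<phi>_def s_def inner_diff_right)
    have KK: "(K *v \<phi>) \<bullet> \<phi> = \<phi> \<bullet> (K *v \<phi>)" by (simp add: inner_commute)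
    have Dexp: "2 * ((P *v ev) \<bullet> (A *v ev + ((- (Wh \<bullet> bv)) + W \<bullet> bv + \<eta>0) *\<^sub>R B))
        + 2 * ((\<Gamma> *v (Iv - Istar)) \<bullet> ((B \<bullet> (P *v ev)) *\<^sub>R bv - \<Sigma> *v Wh))
        = - (ev \<bullet> (Q *v ev)) + 2 * s * \<eta>0
          - 2 * (u \<bullet> (\<Sigma> *v u) + u \<bullet> (\<Sigma> *v (K *v \<phi>)) + \<phi> \<bullet> (K *v \<phi>)) - 2 * (u \<bullet> (\<Sigma> *v W))"
    proof -
      have "2 * ((P *v ev) \<bullet> (A *v ev + ((- (Wh \<bullet> bv)) + W \<bullet> bv + \<eta>0) *\<^sub>R B))
        + 2 * ((\<Gamma> *v (Iv - Istar)) \<bullet> ((B \<bullet> (P *v ev)) *\<^sub>R bv - \<Sigma> *v Wh))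
        = - (ev \<bullet> (Q *v ev)) - 2 * (Wh \<bullet> \<phi>) + 2 * (W \<bullet> \<phi>) + 2 * s * \<eta>0
          + (2 * (u \<bullet> \<phi>) - 2 * (u \<bullet> (\<Sigma> *v Wh)))" by (simp only: e1 e2)
      also have "\<dots> = - (ev \<bullet> (Q *v ev)) + 2 * s * \<eta>0
          - 2 * (u \<bullet> (\<Sigma> *v u) + u \<bullet> (\<Sigma> *v (K *v \<phi>)) + \<phi> \<bullet> (K *v \<phi>)) - 2 * (u \<bullet> (\<Sigma> *v W))"
        unfolding Whu by (simp add: mv_add inner_add_left inner_add_right KK algebra_simps)
      finally show ?thesis .
    qed
    define x where "x = norm ev"
    define y where "y = norm u"
    have x0: "x \<ge> 0" and y0: "y \<ge> 0" by (simp_all add: x_def y_def)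
    have t1: "- (ev \<bullet> (Q *v ev)) \<le> - q1 * x^2" using q1(2) by (simp add: x_def)
    have t2: "2 * s * \<eta>0 \<le> c1 * x"
    proof -
      have "2 * s * \<eta>0 \<le> 2 * (\<bar>s\<bar> * \<bar>\<eta>0\<bar>)" by (simp add: abs_mult[symmetric])
      also have "\<dots> \<le> 2 * ((BN * PN * x) * \<eta>star)"
        using sbound[of ev] eta eta0 by (intro mult_left_mono mult_mono) (auto simp: s_def x_def BN_def PN)
      finally show ?thesis by (simp add: c1_def mult_ac)
    qed
    have t3: "- 2 * (u \<bullet> (\<Sigma> *v u) + u \<bullet> (\<Sigma> *v (K *v \<phi>)) + \<phi> \<bullet> (K *v \<phi>)) \<le> - 2 * \<delta> * s1 * y^2"
    proof -
      have "\<delta> * (s1 * y^2) \<le> \<delta> * (u \<bullet> (\<Sigma> *v u))" using s1(2) \<delta>(1) by (intro mult_left_mono) (auto simp: y_def)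
      also have "\<dots> \<le> u \<bullet> (\<Sigma> *v u) + u \<bullet> (\<Sigma> *v (K *v \<phi>)) + \<phi> \<bullet> (K *v \<phi>)" using \<delta>(2) by blast
      finally show ?thesis by (simp add: mult_ac)
    qed
    have t4: "- 2 * (u \<bullet> (\<Sigma> *v W)) \<le> c2 * y"
    proof -
      have "\<bar>u \<bullet> (\<Sigma> *v W)\<bar> \<le> norm u * norm (\<Sigma> *v W)" by (rule Cauchy_Schwarz_ineq2)
      also have "\<dots> \<le> norm u * (SN * norm W)" using SN(2) by (simp add: mult_left_mono)
      finally have h: "\<bar>u \<bullet> (\<Sigma> *v W)\<bar> \<le> norm u * (SN * norm W)" .
      have "- 2 * (u \<bullet> (\<Sigma> *v W)) \<le> 2 * (norm u * (SN * norm W))"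
        using h abs_ge_minus_self[of "u \<bullet> (\<Sigma> *v W)"] by linarith
      moreover have "2 * (norm u * (SN * norm W)) = c2 * y" unfolding c2_def y_def by simp
      ultimately show ?thesis by simp
    qed
    have amgm1: "c1 * x \<le> q1 / 2 * x^2 + c1^2 / (2 * q1)"
    proof -
      have "0 \<le> (q1 * x - c1)^2 / (2 * q1)" using q1(1) by simp
      also have "\<dots> = q1 / 2 * x^2 + c1^2 / (2 * q1) - c1 * x" using q1(1) by (simp add: field_simps power2_eq_square)
      finally show ?thesis by simp
    qed
    have amgm2: "c2 * y \<le> \<delta> * s1 * y^2 + c2^2 / (4 * \<delta> * s1)"
    proof -
      have ds: "\<delta> * s1 > 0" using \<delta> s1 by simp
      have "0 \<le> (2 * \<delta> * s1 * y - c2)^2 / (4 * \<delta> * s1)" using ds by simp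
      also have "\<dots> = \<delta> * s1 * y^2 + c2^2 / (4 * \<delta> * s1) - c2 * y" using \<delta>(1) s1(1) by (simp add: field_simps power2_eq_square)
      finally show ?thesis by simp
    qed
    have Vb: "ev \<bullet> (P *v ev) + (Iv - Istar) \<bullet> (\<Gamma> *v (Iv - Istar)) \<le> p2 * x^2 + y^2 / g1"
      using Vup[of ev "Iv - Istar"] by (simp add: x_def y_def u_def)
    have cV: "cc * (ev \<bullet> (P *v ev) + (Iv - Istar) \<bullet> (\<Gamma> *v (Iv - Istar))) \<le> q1 / 2 * x^2 + \<delta> * s1 * y^2"
    proof -
      have "cc * (ev \<bullet> (P *v ev) + (Iv - Istar) \<bullet> (\<Gamma> *v (Iv - Istar))) \<le> cc * (p2 * x^2 + y^2 / g1)"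
        using Vb cc0 by (simp add: mult_left_mono)
      also have "\<dots> = (cc * p2) * x^2 + (cc / g1) * y^2" by (simp add: algebra_simps)
      also have "\<dots> \<le> (q1 / 2) * x^2 + (\<delta> * s1) * y^2"
      proof (rule add_mono)
        have "cc \<le> q1 / (2 * p2)" by (simp add: cc_def)
        then have "cc * p2 \<le> q1 / (2 * p2) * p2" using p2(1) by (intro mult_right_mono) auto
        then have "cc * p2 \<le> q1 / 2" using p2(1) by simp
        then show "(cc * p2) * x^2 \<le> (q1 / 2) * x^2" by (rule mult_right_mono) simp_all
        have "cc \<le> \<delta> * s1 * g1" by (simp add: cc_def)
        then have "cc / g1 \<le> \<delta> * s1" using g1(1) by (simp add: divide_le_eq)
        then show "(cc / g1) * y^2 \<le> (\<delta> * s1) * y^2" by (rule mult_right_mono) simp_all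
      qed
      finally show ?thesis .
    qed
    show ?thesis unfolding Dexp using t1 t2 t3 t4 amgm1 amgm2 cV by (simp add: C0_def)
  qed
  have amono: "\<alpha> r \<le> \<alpha> r'" if "0 \<le> r" "r \<le> r'" for r r'
    using \<alpha>(1) that by (auto intro: mono_onD)
  have phib: "norm ((B \<bullet> (P *v ev)) *\<^sub>R \<beta> ev) \<le> BN * PN * r * \<alpha> r" if "norm ev \<le> r" for ev r
  proof -
    have "\<bar>B \<bullet> (P *v ev)\<bar> \<le> BN * PN * r"
      using sbound[of ev] that PN(1) by (smt (verit) BN_def mult_left_mono mult_nonneg_nonneg norm_ge_zero)
    moreover have "norm (\<beta> ev) \<le> \<alpha> r" using \<alpha>(3)[rule_format, of ev] amono[OF norm_ge_zero that] by linarith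
    ultimately have "\<bar>B \<bullet> (P *v ev)\<bar> * norm (\<beta> ev) \<le> (BN * PN * r) * \<alpha> r"
      by (intro mult_mono) (auto intro: order_trans[OF abs_ge_zero])
    then show ?thesis by simp
  qed
  have Kphib: "norm ((B \<bullet> (P *v ev)) *\<^sub>R (K *v \<beta> ev)) \<le> KN * (BN * PN * r * \<alpha> r)" if "norm ev \<le> r" for ev r
  proof -
    have "norm ((B \<bullet> (P *v ev)) *\<^sub>R (K *v \<beta> ev)) = norm (K *v ((B \<bullet> (P *v ev)) *\<^sub>R \<beta> ev))"
      by (simp add: mv_scale)
    also have "\<dots> \<le> KN * norm ((B \<bullet> (P *v ev)) *\<^sub>R \<beta> ev)" using KN(2) by blast
    also have "\<dots> \<le> KN * (BN * PN * r * \<alpha> r)" using phib[OF that] KN(1) by (simp add: mult_left_mono)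
    finally show ?thesis .
  qed
  define R where "R = sqrt (M / p1)"
  define R2 where "R2 = sqrt (M / g1)"
  define b where "b = R + KN * (BN * PN * R * \<alpha> R) + GN * R2 + norm W + 1"
  have R0: "R \<ge> 0" and R20: "R2 \<ge> 0" using M0 p1 g1 by (simp_all add: R_def R2_def)
  have aR: "\<alpha> R \<ge> 0" using \<alpha>(2) R0 by blast
  have b0: "b > 0"
  proof -
    have "0 \<le> KN * (BN * PN * R * \<alpha> R)" using R0 aR KN(1) PN(1) by (simp add: BN_def)
    moreover have "0 \<le> GN * R2" using R20 GN(1) by simp
    ultimately show ?thesis unfolding b_def using R0 by (smt (verit) norm_ge_zero)
  qed
  show ?thesis
  proof (rule exI[of _ b], intro conjI allI impI)
    show "b > 0" by (rule b0)
    fix a :: real assume a: "a > 0"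
    define T where "T = p2 * a^2 + (a + KN * (BN * PN * a * \<alpha> a) + norm W)^2 / g1"
    show "\<exists>T\<ge>0. \<forall>t0\<ge>0. \<forall>e What.
           closed_loop A B \<beta> W \<eta> P \<Gamma> \<Sigma> K e What \<longrightarrow>
           norm (e t0, What t0) \<le> a \<longrightarrow>
           (\<forall>t\<ge>t0 + T. norm (e t, What t) \<le> b)"
    proof (rule exI[of _ T], intro conjI allI impI)
      show "T \<ge> 0" using p2 g1 by (simp add: T_def)
      fix t0 :: real and e :: "real \<Rightarrow> real^'n" and What :: "real \<Rightarrow> real^'m" and t :: real
      assume t00: "t0 \<ge> 0" and CL: "closed_loop A B \<beta> W \<eta> P \<Gamma> \<Sigma> K e What"
        and ia: "norm (e t0, What t0) \<le> a" and tT: "t \<ge> t0 + T"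
      define E' where "E' = (\<lambda>\<theta>. A *v e \<theta> + ((- (What \<theta> \<bullet> \<beta> (e \<theta>))) + W \<bullet> \<beta> (e \<theta>) + \<eta> \<theta>) *\<^sub>R B)"
      define g where "g = (\<lambda>\<theta>. (B \<bullet> (P *v e \<theta>)) *\<^sub>R \<beta> (e \<theta>) - \<Sigma> *v What \<theta>)"
      have ed: "(e has_vector_derivative E' \<theta>) (at \<theta> within {0..})" if "\<theta> \<ge> 0" for \<theta>
        using CL that unfolding closed_loop_def E'_def by blast
      have hI: "\<exists>Iv. (g has_integral Iv) {0..\<theta>} \<and> What \<theta> = (B \<bullet> (P *v e \<theta>)) *\<^sub>R (K *v \<beta> (e \<theta>)) + \<Gamma> *v Iv"
        if "\<theta> \<ge> 0" for \<theta>
        using CL that unfolding closed_loop_def g_def by blast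
      define I where "I = (\<lambda>\<theta>. integral {0..\<theta>} g)"
      have gI: "(g has_integral I \<theta>) {0..\<theta>}" and WhI: "What \<theta> = (B \<bullet> (P *v e \<theta>)) *\<^sub>R (K *v \<beta> (e \<theta>)) + \<Gamma> *v I \<theta>"
        if th: "\<theta> \<ge> 0" for \<theta>
      proof -
        obtain Iv where Iv: "(g has_integral Iv) {0..\<theta>}" "What \<theta> = (B \<bullet> (P *v e \<theta>)) *\<^sub>R (K *v \<beta> (e \<theta>)) + \<Gamma> *v Iv"
          using hI[OF th] by blast
        have "I \<theta> = Iv" unfolding I_def using Iv(1) by (rule integral_unique)
        then show "(g has_integral I \<theta>) {0..\<theta>}" "What \<theta> = (B \<bullet> (P *v e \<theta>)) *\<^sub>R (K *v \<beta> (e \<theta>)) + \<Gamma> *v I \<theta>"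
          using Iv by auto
      qed
      have econt: "continuous_on {0..} e"
        by (rule continuous_on_vector_derivative) (use ed in auto)
      have Icont: "continuous_on {0..x} I" if "x \<ge> 0" for x
        unfolding I_def by (rule indefinite_integral_continuous_1) (use gI[OF that] in blast)
      define J where "J = (\<lambda>\<theta>. I \<theta> - Istar)"
      define V where "V = (\<lambda>\<theta>. e \<theta> \<bullet> (P *v e \<theta>) + J \<theta> \<bullet> (\<Gamma> *v J \<theta>))"
      define D where "D = (\<lambda>\<theta>. 2 * ((P *v e \<theta>) \<bullet> E' \<theta>) + 2 * ((\<Gamma> *v J \<theta>) \<bullet> g \<theta>))"
      have Vcont: "continuous_on {t0..x} V" for x
      proof -
        have c1': "continuous_on {t0..x} e" by (rule continuous_on_subset[OF econt]) (use t00 in auto)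
        have "continuous_on {t0..x} I"
          by (rule continuous_on_subset[OF Icont[of "max x t0"]]) (use t00 in auto)
        then have c2': "continuous_on {t0..x} J" unfolding J_def by (intro continuous_intros)
        show ?thesis unfolding V_def by (intro continuous_on_add cont_quad c1' c2')
      qed
      have V0: "\<forall>x\<ge>t0. V x \<ge> 0"
      proof (intro allI impI)
        fix x
        have "0 \<le> p1 * (norm (e x))^2" using p1 by simp
        also have "\<dots> \<le> e x \<bullet> (P *v e x)" using p1(2) by blast
        finally have h1: "0 \<le> e x \<bullet> (P *v e x)" .
        have "0 \<le> g1 * (norm (J x))^2" using g1 by simp
        also have "\<dots> \<le> J x \<bullet> (\<Gamma> *v J x)" using g1(2) by blast
        finally show "V x \<ge> 0" using h1 by (simp add: V_def)
      qed
      have integ: "(D has_integral (V x - V s)) {s..x}" if sx: "t0 \<le> s" "s \<le> x" for s x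
      proof -
        have x0: "x \<ge> 0" "s \<ge> 0" using sx t00 by auto
        have ep: "((\<lambda>\<theta>. 2 * ((P *v e \<theta>) \<bullet> E' \<theta>)) has_integral (e x \<bullet> (P *v e x) - e s \<bullet> (P *v e s))) {s..x}"
        proof (rule fundamental_theorem_of_calculus[OF sx(2)])
          fix \<theta> assume th: "\<theta> \<in> {s..x}"
          have "(e has_vector_derivative E' \<theta>) (at \<theta> within {s..x})"
            by (rule has_vector_derivative_within_subset[OF ed]) (use th x0 in auto)
          then show "((\<lambda>\<theta>. e \<theta> \<bullet> (P *v e \<theta>)) has_vector_derivative 2 * ((P *v e \<theta>) \<bullet> E' \<theta>)) (at \<theta> within {s..x})"
            by (rule quad_vd[OF _ symP])
        qed
        obtain Re where Re: "Re > 0" "\<forall>\<theta>\<in>{0..x}. norm (e \<theta>) \<le> Re"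
        proof -
          have "compact (e ` {0..x})"
            by (rule compact_continuous_image[OF continuous_on_subset[OF econt]]) auto
          then show ?thesis using that by (auto dest!: compact_imp_bounded simp: bounded_pos)
        qed
        obtain RI where RI: "RI > 0" "\<forall>\<theta>\<in>{0..x}. norm (I \<theta>) \<le> RI"
        proof -
          have "compact (I ` {0..x})" by (rule compact_continuous_image[OF Icont[OF x0(1)]]) auto
          then show ?thesis using that by (auto dest!: compact_imp_bounded simp: bounded_pos)
        qed
        define Lp where "Lp = BN * PN * Re * \<alpha> Re"
        define L where "L = Lp + SN * (KN * Lp + GN * RI)"
        have gb: "\<forall>\<theta>\<in>{s..x}. norm (g \<theta>) \<le> L"
        proof
          fix \<theta> assume th: "\<theta> \<in> {s..x}"
          then have th0: "\<theta> \<in> {0..x}" "\<theta> \<ge> 0" using x0 by auto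
          have n1: "norm ((B \<bullet> (P *v e \<theta>)) *\<^sub>R \<beta> (e \<theta>)) \<le> Lp" unfolding Lp_def using phib Re th0 by blast
          have n2: "norm (What \<theta>) \<le> KN * Lp + GN * RI"
          proof -
            have "norm (What \<theta>) \<le> norm ((B \<bullet> (P *v e \<theta>)) *\<^sub>R (K *v \<beta> (e \<theta>))) + norm (\<Gamma> *v I \<theta>)"
              unfolding WhI[OF th0(2)] by (rule norm_triangle_ineq)
            also have "\<dots> \<le> KN * Lp + GN * RI"
            proof (rule add_mono)
              show "norm ((B \<bullet> (P *v e \<theta>)) *\<^sub>R (K *v \<beta> (e \<theta>))) \<le> KN * Lp" unfolding Lp_def using Kphib Re th0 by blast
              have "norm (\<Gamma> *v I \<theta>) \<le> GN * norm (I \<theta>)" using GN(2) by blast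
              also have "\<dots> \<le> GN * RI" using RI th0 GN(1) by (simp add: mult_left_mono)
              finally show "norm (\<Gamma> *v I \<theta>) \<le> GN * RI" .
            qed
            finally show ?thesis .
          qed
          have "norm (g \<theta>) \<le> norm ((B \<bullet> (P *v e \<theta>)) *\<^sub>R \<beta> (e \<theta>)) + norm (\<Sigma> *v What \<theta>)"
            unfolding g_def by (rule norm_triangle_ineq4)
          also have "\<dots> \<le> Lp + SN * (KN * Lp + GN * RI)"
          proof (rule add_mono[OF n1])
            have "norm (\<Sigma> *v What \<theta>) \<le> SN * norm (What \<theta>)" using SN(2) by blast
            also have "\<dots> \<le> SN * (KN * Lp + GN * RI)" using n2 SN(1) by (simp add: mult_left_mono)
            finally show "norm (\<Sigma> *v What \<theta>) \<le> SN * (KN * Lp + GN * RI)" .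
          qed
          finally show "norm (g \<theta>) \<le> L" by (simp add: L_def)
        qed
        have Jint: "\<forall>y\<in>{s..x}. (g has_integral (J y - J s)) {s..y}"
        proof
          fix y assume y: "y \<in> {s..x}"
          have gy: "g integrable_on {0..y}" using gI[of y] y x0 by auto
          have c: "integral {0..s} g + integral {s..y} g = integral {0..y} g"
            using Henstock_Kurzweil_Integration.integral_combine[OF x0(2) _ gy] y by auto
          have "integral {s..y} g = J y - J s" using c by (simp add: J_def I_def algebra_simps)
          moreover have "g integrable_on {s..y}" using integrable_subinterval_real[OF gy] y x0 by auto
          ultimately show "(g has_integral (J y - J s)) {s..y}" by (metis has_integral_integral)
        qed
        have jp: "((\<lambda>\<theta>. 2 * ((\<Gamma> *v J \<theta>) \<bullet> g \<theta>)) has_integral (J x \<bullet> (\<Gamma> *v J x) - J s \<bullet> (\<Gamma> *v J s))) {s..x}"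
          by (rule CR[OF sx(2) assms(6) gb Jint])
        have "(D has_integral ((e x \<bullet> (P *v e x) - e s \<bullet> (P *v e s)) + (J x \<bullet> (\<Gamma> *v J x) - J s \<bullet> (\<Gamma> *v J s)))) {s..x}"
          unfolding D_def by (rule has_integral_add[OF ep jp])
        then show ?thesis by (simp add: V_def algebra_simps)
      qed
      have dec: "D x \<le> -1" if x: "x \<ge> t0" "V x \<ge> M" for x
      proof -
        have x0: "x \<ge> 0" using x t00 by auto
        have "D x \<le> - cc * V x + C0"
          using Dbound[OF WhI[OF x0], of "\<eta> x"] assms(13) x0
          unfolding D_def E'_def g_def V_def J_def by blast
        also have "\<dots> \<le> - cc * M + C0" using x(2) cc0 by (simp add: mult_left_mono)
        also have "\<dots> = -1" using cc0 by (simp add: M_def)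
        finally show ?thesis .
      qed
      have et0: "norm (e t0) \<le> a" using norm_fst_le[of "e t0" "What t0"] ia by linarith
      have Wt0: "norm (What t0) \<le> a" using norm_snd_le[of "What t0" "e t0"] ia by linarith
      have Vt0: "V t0 \<le> T"
      proof -
        have u1: "\<Gamma> *v J t0 = \<Gamma> *v I t0 - W" by (simp add: J_def mv_diff GI)
        have u2: "\<Gamma> *v I t0 = What t0 - (B \<bullet> (P *v e t0)) *\<^sub>R (K *v \<beta> (e t0))"
          using WhI[OF t00] by (simp add: algebra_simps)
        have uJ: "\<Gamma> *v J t0 = What t0 - (B \<bullet> (P *v e t0)) *\<^sub>R (K *v \<beta> (e t0)) - W"
          unfolding u1 u2 ..
        have nu: "norm (\<Gamma> *v J t0) \<le> a + KN * (BN * PN * a * \<alpha> a) + norm W"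
        proof -
          have "norm (\<Gamma> *v J t0) \<le> norm (What t0) + norm ((B \<bullet> (P *v e t0)) *\<^sub>R (K *v \<beta> (e t0))) + norm W"
            unfolding uJ using norm_triangle_ineq4[of "What t0 - (B \<bullet> (P *v e t0)) *\<^sub>R (K *v \<beta> (e t0))" W]
              norm_triangle_ineq4[of "What t0" "(B \<bullet> (P *v e t0)) *\<^sub>R (K *v \<beta> (e t0))"] by linarith
          then show ?thesis using Wt0 Kphib[OF et0] by linarith
        qed
        have "V t0 \<le> p2 * (norm (e t0))^2 + (norm (\<Gamma> *v J t0))^2 / g1" unfolding V_def by (rule Vup)
        also have "\<dots> \<le> p2 * a^2 + (a + KN * (BN * PN * a * \<alpha> a) + norm W)^2 / g1"
        proof (rule add_mono)
          show "p2 * (norm (e t0))^2 \<le> p2 * a^2" using et0 p2(1) by (simp add: power_mono mult_left_mono)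
          show "(norm (\<Gamma> *v J t0))^2 / g1 \<le> (a + KN * (BN * PN * a * \<alpha> a) + norm W)^2 / g1"
            using nu g1(1) by (simp add: power_mono divide_right_mono)
        qed
        finally show ?thesis by (simp add: T_def)
      qed
      have VtM: "V t \<le> M"
        by (rule ult[of t0 V M D t, OF Vcont V0 M0 integ dec]) (use tT Vt0 in auto)
      have eP: "e t \<bullet> (P *v e t) \<ge> 0" and JG: "J t \<bullet> (\<Gamma> *v J t) \<ge> 0"
        using p1 g1 by (metis mult_nonneg_nonneg order_trans less_imp_le zero_le_power2)+
      have etR: "norm (e t) \<le> R"
      proof -
        have "p1 * (norm (e t))^2 \<le> M" using p1(2) VtM JG unfolding V_def by (smt (verit))
        then have "(norm (e t))^2 \<le> M / p1" using p1(1) by (simp add: field_simps mult.commute)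
        then show ?thesis unfolding R_def by (rule real_le_rsqrt)
      qed
      have JtR: "norm (J t) \<le> R2"
      proof -
        have "g1 * (norm (J t))^2 \<le> M" using g1(2) VtM eP unfolding V_def by (smt (verit))
        then have "(norm (J t))^2 \<le> M / g1" using g1(1) by (simp add: field_simps mult.commute)
        then show ?thesis unfolding R2_def by (rule real_le_rsqrt)
      qed
      have t0': "t \<ge> 0" using tT t00 \<open>T \<ge> 0\<close> by linarith
      have w1: "\<Gamma> *v J t = \<Gamma> *v I t - W" by (simp add: J_def mv_diff GI)
      have Wht: "What t = (B \<bullet> (P *v e t)) *\<^sub>R (K *v \<beta> (e t)) + \<Gamma> *v J t + W"
        unfolding w1 using WhI[OF t0'] by simp
      have "norm (What t) \<le> KN * (BN * PN * R * \<alpha> R) + GN * R2 + norm W"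
      proof -
        have "norm (What t) \<le> norm ((B \<bullet> (P *v e t)) *\<^sub>R (K *v \<beta> (e t))) + norm (\<Gamma> *v J t) + norm W"
          unfolding Wht using norm_triangle_ineq[of "(B \<bullet> (P *v e t)) *\<^sub>R (K *v \<beta> (e t)) + \<Gamma> *v J t" W]
              norm_triangle_ineq[of "(B \<bullet> (P *v e t)) *\<^sub>R (K *v \<beta> (e t))" "\<Gamma> *v J t"] by linarith
        moreover have "norm (\<Gamma> *v J t) \<le> GN * R2"
          using GN JtR by (meson mult_left_mono order_trans less_imp_le)
        ultimately show ?thesis using Kphib[OF etR] by linarith
      qed
      then show "norm (e t, What t) \<le> b"
        using norm_Pair_le[of "e t" "What t"] etR unfolding b_def by linarith
    qed
  qed
qed


end
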